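(* Let $(b_n)_{n\ge 0}$ and $(p_{2n})_{n\ge 1}$ be sequences of non-negative integers, not all $p_{2n}$ zero, and let $$V(x)=\sum_{n=0}^\infty b_n x^n,\qquad U(x)=\sum_{n=1}^\infty p_{2n}x^n$$ have radii of convergence $x_V$ and $x_U$ respectively, where $0<x_U<x_V\le 1$ and $\lim_{x\to x_V^-}V(x)=\infty$. Write $U(x_U^-)=\lim_{x\to x_U^-}U(x)$ and $U'(x_U^-)=\lim_{x\to x_U^-}U'(x)$ (values in $(0,\infty]$). For $w\ge1$ let $x_c(w)$ be the radius of convergence in $x$ of $Z(x,w)=V(wx)/(1-U(x)V(wx))$, let $f(w)=-\log x_c(w)$, and let $\theta(w)=w\,f'(w)$ wherever $f$ is differentiable. (i) If $U(x_U^-)=\infty$ or $U(x_U^-)V(x_U)\ge 1$, the model has no phase transition at finite temperature, i.e. $f$ is real-analytic on $(1,\infty)$. (ii) Suppose $U(x_U^-)<\infty$ and $U(x_U^-)V(x_U)<1$, and let $w_c>1$ be defined by $U(x_U^-)V(w_cx_U)=1$. Then $\theta(w)=0$ for $1<w<w_c$ and $\theta(w)>0$ for $w>w_c$. If moreover $U'(x_U^-)=\infty$, then $\theta(w)\to0$ as $w\to w_c^+$ (a continuous phase transition at $w_c$); if $U'(x_U^-)<\infty$, then $\theta(w)\to\theta_c$ for some $\theta_c>0$ as $w\to w_c^+$ (a first order phase transition at $w_c$).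
   Context: This is the Poland–Scheraga model of DNA denaturation: $b_n$ counts paths of length $n$, $p_{2n}$ counts marked loops of length $2n$, $w=e^{-E/kT}\ge1$ is a Boltzmann factor, $f$ is the free energy and $\theta(w)=w\,df/dw$ is the fraction of shared bonds. A phase transition at $w_c$ is called continuous if $\theta$ is continuous at $w_c$ (tends to $0$ from above) and first order if $\theta$ jumps at $w_c$. *)

theory Defs
  imports "HOL-Analysis.Analysis"
begin

definition real_analytic_on :: "(real \<Rightarrow> real) \<Rightarrow> real set \<Rightarrow> bool" where
  "real_analytic_on f S \<longleftrightarrow>
     (\<forall>x\<in>S. \<exists>r>0. \<exists>a::nat \<Rightarrow> real. \<forall>y. \<bar>y - x\<bar> < r \<longrightarrow> (\<lambda>n. a n * (y - x) ^ n) sums f y)"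

text \<open>Coefficients of U: p n stands for p_{2n}, n >= 1; the constant term is 0.\<close>
definition U_coeff :: "(nat \<Rightarrow> nat) \<Rightarrow> nat \<Rightarrow> real" where
  "U_coeff p n = (if n = 0 then 0 else real (p n))"

definition PS_V :: "(nat \<Rightarrow> nat) \<Rightarrow> real \<Rightarrow> real" where
  "PS_V b x = (\<Sum>n. real (b n) * x ^ n)"

definition PS_U :: "(nat \<Rightarrow> nat) \<Rightarrow> real \<Rightarrow> real" where
  "PS_U p x = (\<Sum>n. U_coeff p n * x ^ n)"

definition Z_fps :: "(nat \<Rightarrow> nat) \<Rightarrow> (nat \<Rightarrow> nat) \<Rightarrow> real \<Rightarrow> real fps" where
  "Z_fps b p w =
     (let Vw = Abs_fps (\<lambda>n. real (b n) * w ^ n);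
          Uf = Abs_fps (U_coeff p)
      in Vw * inverse (1 - Uf * Vw))"

definition x_crit :: "(nat \<Rightarrow> nat) \<Rightarrow> (nat \<Rightarrow> nat) \<Rightarrow> real \<Rightarrow> ereal" where
  "x_crit b p w = fps_conv_radius (Z_fps b p w)"

definition free_energy :: "(nat \<Rightarrow> nat) \<Rightarrow> (nat \<Rightarrow> nat) \<Rightarrow> real \<Rightarrow> real" where
  "free_energy b p w = - ln (real_of_ereal (x_crit b p w))"

definition theta :: "(nat \<Rightarrow> nat) \<Rightarrow> (nat \<Rightarrow> nat) \<Rightarrow> real \<Rightarrow> real" where
  "theta b p w = w * deriv (free_energy b p) w"

end

theory Submission
  imports Defs "HOL-Complex_Analysis.Complex_Analysis"
begin

lemma ps_summ:
  fixes a :: "nat \<Rightarrow> real"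
  assumes "ereal \<bar>x\<bar> < conv_radius a"
  shows "summable (\<lambda>n. a n * x ^ n)"
  using summable_in_conv_radius[of x a] assms by simp

lemma ps_nonneg:
  fixes a :: "nat \<Rightarrow> real"
  assumes "\<And>n. a n \<ge> 0" "0 \<le> x" "ereal x < conv_radius a"
  shows "0 \<le> (\<Sum>n. a n * x ^ n)"
  using assms ps_summ[of x a] by (intro suminf_nonneg) auto

lemma ps_pos:
  fixes a :: "nat \<Rightarrow> real"
  assumes "\<And>n. a n \<ge> 0" "a m > 0" "0 < x" "ereal x < conv_radius a"
  shows "0 < (\<Sum>n. a n * x ^ n)"
  using assms ps_summ[of x a] by (intro suminf_pos2[where i=m]) auto

lemma ps_mono:
  fixes a :: "nat \<Rightarrow> real"
  assumes "\<And>n. a n \<ge> 0" "0 \<le> x" "x \<le> y" "ereal y < conv_radius a"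
  shows "(\<Sum>n. a n * x ^ n) \<le> (\<Sum>n. a n * y ^ n)"
proof (rule suminf_le)
  have "ereal x < conv_radius a" using assms by (meson ereal_less_eq(3) le_less_trans)
  then show "summable (\<lambda>n. a n * x ^ n)" using assms by (intro ps_summ) auto
  show "summable (\<lambda>n. a n * y ^ n)" using assms by (intro ps_summ) auto
  show "a n * x ^ n \<le> a n * y ^ n" for n
    using assms by (intro mult_left_mono power_mono) auto
qed

lemma ps_strict_mono:
  fixes a :: "nat \<Rightarrow> real"
  assumes "\<And>n. a n \<ge> 0" "a m > 0" "m \<ge> 1" "0 \<le> x" "x < y" "ereal y < conv_radius a"
  shows "(\<Sum>n. a n * x ^ n) < (\<Sum>n. a n * y ^ n)"
proof -
  have "ereal x < conv_radius a" using assms by (meson ereal_less_eq(3) le_less_trans less_imp_le)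
  then have sx: "summable (\<lambda>n. a n * x ^ n)" using assms by (intro ps_summ) auto
  have sy: "summable (\<lambda>n. a n * y ^ n)" using assms by (intro ps_summ) auto
  have "0 < (\<Sum>n. a n * y ^ n - a n * x ^ n)"
  proof (rule suminf_pos2[where i=m])
    show "summable (\<lambda>n. a n * y ^ n - a n * x ^ n)" by (rule summable_diff[OF sy sx])
    show "0 \<le> a n * y ^ n - a n * x ^ n" for n
      using assms by (auto intro!: mult_left_mono power_mono)
    have "x ^ m < y ^ m" using assms by (intro power_strict_mono) auto
    then show "0 < a m * y ^ m - a m * x ^ m" using assms by simp
  qed
  also have "\<dots> = (\<Sum>n. a n * y ^ n) - (\<Sum>n. a n * x ^ n)"
    by (rule suminf_diff[OF sy sx, symmetric])
  finally show ?thesis by simp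
qed

locale PS =
  fixes b p :: "nat \<Rightarrow> nat" and xU xV :: real
  assumes p_nonzero: "\<exists>n\<ge>1. p n \<noteq> 0"
    and radV: "conv_radius (\<lambda>n. real (b n)) = ereal xV"
    and radU: "conv_radius (U_coeff p) = ereal xU"
    and xU_pos: "0 < xU" and xU_lt: "xU < xV" and xV_le: "xV \<le> 1"
    and V_blowup: "filterlim (PS_V b) at_top (at_left xV)"
begin

abbreviation "U \<equiv> PS_U p"
abbreviation "V \<equiv> PS_V b"
definition "Ur = Abs_fps (U_coeff p)"
definition "Vr = Abs_fps (\<lambda>n. real (b n))"

lemma U_eval: "U = eval_fps Ur"
  by (auto simp: fun_eq_iff PS_U_def eval_fps_def Ur_def)
lemma V_eval: "V = eval_fps Vr"
  by (auto simp: fun_eq_iff PS_V_def eval_fps_def Vr_def)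
lemma radUr: "fps_conv_radius Ur = ereal xU"
  using radU by (simp add: fps_conv_radius_def Ur_def)
lemma radVr: "fps_conv_radius Vr = ereal xV"
  using radV by (simp add: fps_conv_radius_def Vr_def)
lemma u_nonneg: "U_coeff p n \<ge> 0"
  by (simp add: U_coeff_def)
lemma u_pos: obtains m where "m \<ge> 1" "U_coeff p m > 0"
  using p_nonzero by (auto simp: U_coeff_def)
lemma U_0: "U 0 = 0"
  by (simp add: U_eval eval_fps_at_0 Ur_def U_coeff_def)

lemma b_pos: obtains m where "m \<ge> 1" "b m > 0"
proof (rule ccontr)
  assume "\<not> thesis"
  with that have z: "\<And>n. n \<ge> 1 \<Longrightarrow> b n = 0" by force
  have "V x = real (b 0)" for x
  proof -
    have "(\<lambda>n. real (b n) * x ^ n) = (\<lambda>n. if n = 0 then real (b 0) else 0)"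
      using z by (auto simp: fun_eq_iff)
    moreover have "(\<lambda>n. if n = 0 then real (b 0) else 0) sums real (b 0)"
      using sums_single[of 0 "\<lambda>_. real (b 0)"] by simp
    ultimately show ?thesis by (simp add: PS_V_def sums_iff)
  qed
  then have "V = (\<lambda>_. real (b 0))" by (rule ext)
  then have "filterlim (\<lambda>_. real (b 0)) at_top (at_left xV)"
    using V_blowup by simp
  then have "eventually (\<lambda>_. real (b 0) + 1 \<le> real (b 0)) (at_left xV)"
    by (simp add: filterlim_at_top)
  then have "eventually (\<lambda>_. False) (at_left xV)" by simp
  then show False using xU_pos xU_lt by (simp add: trivial_limit_at_left_real)
qed

lemma U_pos: "0 < x \<Longrightarrow> x < xU \<Longrightarrow> 0 < U x"
proof -
  assume a: "0 < x" "x < xU"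
  obtain m where "m \<ge> 1" "U_coeff p m > 0" by (rule u_pos)
  then show ?thesis unfolding PS_U_def using a radU u_nonneg
    by (intro ps_pos[where m=m]) auto
qed

lemma U_nonneg: "0 \<le> x \<Longrightarrow> x < xU \<Longrightarrow> 0 \<le> U x"
  using U_pos U_0 by (cases "x = 0") (auto intro: less_imp_le)

lemma U_strict: "0 \<le> x \<Longrightarrow> x < y \<Longrightarrow> y < xU \<Longrightarrow> U x < U y"
proof -
  assume a: "0 \<le> x" "x < y" "y < xU"
  obtain m where "m \<ge> 1" "U_coeff p m > 0" by (rule u_pos)
  then show ?thesis unfolding PS_U_def using a radU u_nonneg
    by (intro ps_strict_mono[where m=m]) auto
qed

lemma U_mono: "0 \<le> x \<Longrightarrow> x \<le> y \<Longrightarrow> y < xU \<Longrightarrow> U x \<le> U y"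
  using U_strict by (cases "x = y") (auto intro: less_imp_le)

lemma V_pos: "0 < x \<Longrightarrow> x < xV \<Longrightarrow> 0 < V x"
proof -
  assume a: "0 < x" "x < xV"
  obtain m where "m \<ge> 1" "b m > 0" by (rule b_pos)
  then show ?thesis unfolding PS_V_def using a radV
    by (intro ps_pos[where m=m]) auto
qed

lemma V_nonneg: "0 \<le> x \<Longrightarrow> x < xV \<Longrightarrow> 0 \<le> V x"
  unfolding PS_V_def using radV by (intro ps_nonneg) auto

lemma V_strict: "0 \<le> x \<Longrightarrow> x < y \<Longrightarrow> y < xV \<Longrightarrow> V x < V y"
proof -
  assume a: "0 \<le> x" "x < y" "y < xV"
  obtain m where "m \<ge> 1" "b m > 0" by (rule b_pos)
  then show ?thesis unfolding PS_V_def using a radV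
    by (intro ps_strict_mono[where m=m]) auto
qed

lemma V_mono: "0 \<le> x \<Longrightarrow> x \<le> y \<Longrightarrow> y < xV \<Longrightarrow> V x \<le> V y"
  using V_strict by (cases "x = y") (auto intro: less_imp_le)

lemma U_deriv: "\<bar>x\<bar> < xU \<Longrightarrow> (U has_real_derivative eval_fps (fps_deriv Ur) x) (at x)"
  unfolding U_eval by (rule has_field_derivative_eval_fps) (simp add: radUr)
lemma V_deriv: "\<bar>x\<bar> < xV \<Longrightarrow> (V has_real_derivative eval_fps (fps_deriv Vr) x) (at x)"
  unfolding V_eval by (rule has_field_derivative_eval_fps) (simp add: radVr)
lemma U_deriv_eq: "\<bar>x\<bar> < xU \<Longrightarrow> deriv U x = eval_fps (fps_deriv Ur) x"
  using U_deriv by (rule DERIV_imp_deriv)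
lemma V_deriv_eq: "\<bar>x\<bar> < xV \<Longrightarrow> deriv V x = eval_fps (fps_deriv Vr) x"
  using V_deriv by (rule DERIV_imp_deriv)

lemma radUr': "fps_conv_radius (fps_deriv Ur) \<ge> ereal xU"
  using fps_conv_radius_deriv[of Ur] radUr by simp
lemma radVr': "fps_conv_radius (fps_deriv Vr) \<ge> ereal xV"
  using fps_conv_radius_deriv[of Vr] radVr by simp

lemma dU_nonneg: "0 \<le> x \<Longrightarrow> x < xU \<Longrightarrow> 0 \<le> deriv U x"
proof -
  assume a: "0 \<le> x" "x < xU"
  have "0 \<le> (\<Sum>n. fps_nth (fps_deriv Ur) n * x ^ n)"
    using a radUr' by (intro ps_nonneg) (auto simp: Ur_def U_coeff_def fps_conv_radius_def
        intro: less_le_trans[of _ "ereal xU"])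
  then show ?thesis using a by (simp add: U_deriv_eq eval_fps_def)
qed

lemma dV_pos: "0 < x \<Longrightarrow> x < xV \<Longrightarrow> 0 < deriv V x"
proof -
  assume a: "0 < x" "x < xV"
  obtain m where m: "m \<ge> 1" "b m > 0" by (rule b_pos)
  have "0 < (\<Sum>n. fps_nth (fps_deriv Vr) n * x ^ n)"
    using a radVr' m
    by (intro ps_pos[where m="m - 1"]) (auto simp: Vr_def fps_conv_radius_def
        intro: less_le_trans[of _ "ereal xV"])
  then show ?thesis using a by (simp add: V_deriv_eq eval_fps_def)
qed

end

context PS
begin

definition "Vw w = Abs_fps (\<lambda>n. real (b n) * w ^ n)"
definition "Cf w = Ur * Vw w"

lemma Z_eq: "Z_fps b p w = Vw w * inverse (1 - Cf w)"
  by (simp add: Z_fps_def Let_def Vw_def Ur_def Cf_def)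

lemma x_crit_eq: "x_crit b p w = conv_radius (fps_nth (Vw w * inverse (1 - Cf w)))"
  by (simp add: x_crit_def fps_conv_radius_def Z_eq)

lemma radVw: "w > 0 \<Longrightarrow> fps_conv_radius (Vw w) = ereal (xV / w)"
proof -
  assume w: "w > 0"
  have "fps_conv_radius (Vw w) = conv_radius (\<lambda>n. w ^ n * real (b n))"
    by (simp add: fps_conv_radius_def Vw_def mult.commute)
  also have "\<dots> = conv_radius (\<lambda>n. real (b n)) / ereal (norm w)"
    using w by (intro conv_radius_mult_power) auto
  finally show ?thesis using radV w by simp
qed

lemma eval_Vw: "eval_fps (Vw w) x = V (w * x)"
  by (simp add: eval_fps_def Vw_def PS_V_def power_mult_distrib mult.assoc)

lemma radCf: "w > 0 \<Longrightarrow> fps_conv_radius (Cf w) \<ge> min (ereal xU) (ereal (xV / w))"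
  unfolding Cf_def using fps_conv_radius_mult[of Ur "Vw w"] radUr radVw by simp

lemma eval_Cf: "w > 0 \<Longrightarrow> \<bar>x\<bar> < xU \<Longrightarrow> \<bar>w * x\<bar> < xV \<Longrightarrow> eval_fps (Cf w) x = U x * V (w * x)"
proof -
  assume a: "w > 0" "\<bar>x\<bar> < xU" "\<bar>w * x\<bar> < xV"
  have "\<bar>x\<bar> < xV / w" using a by (simp add: field_simps abs_mult)
  then show ?thesis unfolding Cf_def using a
    by (subst eval_fps_mult) (auto simp: radUr radVw U_eval eval_Vw)
qed

lemma Cf0: "fps_nth (Cf w) 0 = 0"
  by (simp add: Cf_def Ur_def U_coeff_def)

lemma Z_rec: "Vw w * inverse (1 - Cf w) = Vw w + Cf w * (Vw w * inverse (1 - Cf w))"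
proof -
  define D where "D = 1 - Cf w"
  have D0: "fps_nth D 0 \<noteq> 0" by (simp add: D_def Cf0)
  define X where "X = Vw w * inverse D"
  have "X * D = Vw w"
    using D0 by (simp add: X_def mult.assoc inverse_mult_eq_1)
  moreover have "X * D = X - Cf w * X" by (simp add: D_def algebra_simps)
  ultimately have "X = Vw w + Cf w * X" by (simp add: algebra_simps)
  then show ?thesis by (simp only: X_def D_def)
qed

lemma Vw_nonneg: "w \<ge> 0 \<Longrightarrow> fps_nth (Vw w) n \<ge> 0"
  by (simp add: Vw_def)

lemma Cf_nonneg: "w \<ge> 0 \<Longrightarrow> fps_nth (Cf w) n \<ge> 0"
  unfolding Cf_def fps_mult_nth
  by (intro sum_nonneg mult_nonneg_nonneg) (auto simp: Ur_def u_nonneg Vw_nonneg)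

lemma Z_nth_rec: "fps_nth (Vw w * inverse (1 - Cf w)) n =
   fps_nth (Vw w) n + (\<Sum>i=0..n. fps_nth (Cf w) i * fps_nth (Vw w * inverse (1 - Cf w)) (n - i))"
  by (subst Z_rec) (simp add: fps_mult_nth)

lemma Z_nonneg: "w \<ge> 0 \<Longrightarrow> fps_nth (Vw w * inverse (1 - Cf w)) n \<ge> 0"
proof (induction n rule: less_induct)
  case (less n)
  have "(\<Sum>i=0..n. fps_nth (Cf w) i * fps_nth (Vw w * inverse (1 - Cf w)) (n - i)) \<ge> 0"
  proof (intro sum_nonneg)
    fix i assume i: "i \<in> {0..n}"
    show "0 \<le> fps_nth (Cf w) i * fps_nth (Vw w * inverse (1 - Cf w)) (n - i)"
    proof (cases "i = 0")
      case True then show ?thesis by (simp add: Cf0)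
    next
      case False
      then have "n - i < n" using i by auto
      then show ?thesis using less Cf_nonneg by (intro mult_nonneg_nonneg) auto
    qed
  qed
  then show ?case using Z_nth_rec[of w n] Vw_nonneg[OF less.prems, of n] by linarith
qed

lemma triangle_bound:
  fixes a c :: "nat \<Rightarrow> real"
  assumes "\<And>i. a i \<ge> 0" "\<And>i. c i \<ge> 0"
  shows "(\<Sum>n<N. \<Sum>i\<le>n. a i * c (n - i)) \<le> (\<Sum>i<N. a i) * (\<Sum>j<N. c j)"
proof -
  have "(\<Sum>n<N. \<Sum>i\<le>n. a i * c (n - i)) = (\<Sum>(i,j)\<in>{(i,j). i+j < N}. a i * c j)"
    by (rule sum.triangle_reindex[symmetric])
  also have "\<dots> \<le> (\<Sum>(i,j)\<in>{..<N} \<times> {..<N}. a i * c j)"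
    by (rule sum_mono2) (auto intro: mult_nonneg_nonneg assms)
  also have "\<dots> = (\<Sum>i<N. a i) * (\<Sum>j<N. c j)"
    by (simp add: sum_product sum.cartesian_product)
  finally show ?thesis .
qed

end

context PS
begin

abbreviation "Zf w \<equiv> Vw w * inverse (1 - Cf w)"

lemma RAD_ge:
  assumes w: "w > 0" and R: "R > 0"
    and H: "\<And>x. 0 < x \<Longrightarrow> x < R \<Longrightarrow> x < xU \<and> w * x < xV \<and> U x * V (w * x) < 1"
  shows "x_crit b p w \<ge> ereal R"
  unfolding x_crit_eq
proof (rule conv_radius_geI_ex')
  fix r :: real assume r: "0 < r" "ereal r < ereal R"
  then have r': "r < R" by simp
  from H[OF r(1) r'] have hr: "r < xU" "w * r < xV" "U r * V (w * r) < 1" by auto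
  have rV: "r < xV / w" using hr w by (simp add: field_simps)
  define z where "z n = fps_nth (Zf w) n * r ^ n" for n
  define c where "c n = fps_nth (Cf w) n * r ^ n" for n
  define v where "v n = fps_nth (Vw w) n * r ^ n" for n
  have z0: "z n \<ge> 0" for n unfolding z_def using Z_nonneg w r by simp
  have c0: "c n \<ge> 0" for n unfolding c_def using Cf_nonneg w r by simp
  have v0: "v n \<ge> 0" for n unfolding v_def using Vw_nonneg w r by simp
  have radC: "ereal (norm r) < fps_conv_radius (Cf w)"
  proof -
    have "ereal (norm r) < min (ereal xU) (ereal (xV / w))" using hr rV r by simp
    then show ?thesis using radCf[OF w] by (rule less_le_trans)
  qed
  have radV': "ereal (norm r) < fps_conv_radius (Vw w)"
    using radVw[OF w] rV r by auto
  have Csum: "c sums (U r * V (w * r))"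
  proof -
    have "(\<lambda>n. fps_nth (Cf w) n * r^n) sums eval_fps (Cf w) r" using sums_eval_fps[OF radC] by simp
    moreover have "eval_fps (Cf w) r = U r * V (w * r)"
      using eval_Cf[OF w, of r] hr r w by (simp add: abs_mult)
    ultimately show ?thesis unfolding c_def by simp
  qed
  have Vsum: "v sums V (w * r)"
    using sums_eval_fps[OF radV'] unfolding v_def by (simp add: eval_Vw)
  define Cr where "Cr = U r * V (w * r)"
  have Cr1: "Cr < 1" using hr by (simp add: Cr_def)
  have zrec: "z n = v n + (\<Sum>i\<le>n. c i * z (n - i))" for n
  proof -
    have "z n = (fps_nth (Vw w) n + (\<Sum>i=0..n. fps_nth (Cf w) i * fps_nth (Zf w) (n - i))) * r ^ n"
      unfolding z_def by (subst Z_nth_rec) simp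
    also have "\<dots> = v n + (\<Sum>i=0..n. fps_nth (Cf w) i * fps_nth (Zf w) (n - i) * r ^ n)"
      by (simp only: v_def distrib_right sum_distrib_right)
    also have "(\<Sum>i=0..n. fps_nth (Cf w) i * fps_nth (Zf w) (n - i) * r ^ n) = (\<Sum>i\<le>n. c i * z (n - i))"
    proof (rule sum.cong)
      fix i assume "i \<in> {..n}"
      then have "r ^ n = r ^ i * r ^ (n - i)" by (simp add: power_add[symmetric])
      then show "fps_nth (Cf w) i * fps_nth (Zf w) (n - i) * r ^ n = c i * z (n - i)"
        by (simp add: c_def z_def)
    qed (auto simp: atLeast0AtMost)
    finally show ?thesis .
  qed
  show "summable (\<lambda>n. fps_nth (Zf w) n * of_real r ^ n)"
  proof -
    have bound: "(\<Sum>n<N. z n) \<le> V (w * r) / (1 - Cr)" for N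
    proof -
      have e1: "(\<Sum>n<N. z n) = (\<Sum>n<N. v n) + (\<Sum>n<N. \<Sum>i\<le>n. c i * z (n - i))"
      proof -
        have "(\<Sum>n<N. z n) = (\<Sum>n<N. v n + (\<Sum>i\<le>n. c i * z (n - i)))"
          by (rule sum.cong[OF refl]) (rule zrec)
        then show ?thesis by (simp only: sum.distrib)
      qed
      have e2: "(\<Sum>n<N. v n) \<le> V (w * r)"
        using Vsum v0 sum_le_suminf[of v "{..<N}"] by (simp add: sums_iff)
      have e3: "(\<Sum>n<N. \<Sum>i\<le>n. c i * z (n - i)) \<le> (\<Sum>i<N. c i) * (\<Sum>j<N. z j)"
        by (rule triangle_bound) (auto intro: c0 z0)
      have e4: "(\<Sum>i<N. c i) \<le> Cr"
        using Csum c0 sum_le_suminf[of c "{..<N}"] unfolding Cr_def by (simp add: sums_iff)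
      have zs: "(\<Sum>j<N. z j) \<ge> 0" using z0 by (simp add: sum_nonneg)
      have e5: "(\<Sum>i<N. c i) * (\<Sum>j<N. z j) \<le> Cr * (\<Sum>j<N. z j)"
        using e4 zs by (rule mult_right_mono)
      have "(\<Sum>n<N. z n) \<le> V (w * r) + Cr * (\<Sum>j<N. z j)"
        using e1 e2 e3 e5 by linarith
      then have "(\<Sum>n<N. z n) * (1 - Cr) \<le> V (w * r)" by (simp add: algebra_simps)
      then show ?thesis using Cr1 by (simp add: field_simps)
    qed
    have "summable z" by (rule summableI_nonneg_bounded[OF z0 bound])
    then show ?thesis by (simp add: z_def[abs_def])
  qed
qed

lemma RAD_le_root:
  assumes w: "w > 0" and x0: "0 < x0" "x0 < xU" "w * x0 < xV" and root: "U x0 * V (w * x0) = 1"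
  shows "x_crit b p w \<le> ereal x0"
proof (rule ccontr)
  assume "\<not> ?thesis"
  then have rz: "ereal (norm x0) < fps_conv_radius (Zf w)"
    using x0 by (simp add: x_crit_eq fps_conv_radius_def)
  have rV: "x0 < xV / w" using x0 w by (simp add: field_simps)
  have radC: "ereal (norm x0) < fps_conv_radius (Cf w)"
  proof -
    have "ereal (norm x0) < min (ereal xU) (ereal (xV / w))" using x0 rV by simp
    then show ?thesis using radCf[OF w] by (rule less_le_trans)
  qed
  have radD: "ereal (norm x0) < fps_conv_radius (1 - Cf w)"
    using fps_conv_radius_diff[of 1 "Cf w"] radC by (auto intro: less_le_trans)
  have D0: "fps_nth (1 - Cf w) 0 \<noteq> 0" by (simp add: Cf0)
  have eq: "Zf w * (1 - Cf w) = Vw w"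
    by (simp only: mult.assoc inverse_mult_eq_1[OF D0] mult_1_right)
  have "eval_fps (Vw w) x0 = eval_fps (Zf w) x0 * eval_fps (1 - Cf w) x0"
    using eval_fps_mult[OF rz radD] by (simp only: eq)
  also have "eval_fps (1 - Cf w) x0 = 1 - U x0 * V (w * x0)"
    using eval_fps_diff[of x0 1 "Cf w"] radC eval_Cf[OF w] x0 w by (simp add: abs_mult)
  finally have "V (w * x0) = 0" using root by (simp add: eval_Vw)
  then show False using root by simp
qed

lemma RAD_le_U:
  assumes w: "w > 0"
  shows "x_crit b p w \<le> ereal xU"
proof (rule ccontr)
  assume "\<not> ?thesis"
  then have lt: "ereal xU < conv_radius (fps_nth (Zf w))" by (simp add: x_crit_eq)
  obtain r where r: "xU < r" "ereal r < conv_radius (fps_nth (Zf w))"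
  proof (cases "conv_radius (fps_nth (Zf w))")
    case (real R) with lt show ?thesis by (intro that[of "(xU + R) / 2"]) auto
  next
    case PInf with that[of "xU + 1"] show ?thesis by auto
  next
    case MInf with lt show ?thesis by auto
  qed
  have r0: "r > 0" using r xU_pos by simp
  obtain m where m: "m \<ge> 1" "b m > 0" by (rule b_pos)
  define vm where "vm = fps_nth (Vw w) m"
  have vm: "vm > 0" using m w by (simp add: vm_def Vw_def)
  have sz: "summable (\<lambda>n. fps_nth (Zf w) n * r ^ n)"
    using ps_summ[of r "fps_nth (Zf w)"] r r0 by simp
  have sz2: "summable (\<lambda>n. fps_nth (Zf w) (n + 2 * m) * r ^ (n + 2 * m))"
    using summable_ignore_initial_segment[OF sz, of "2 * m"] by simp
  have Zge1: "fps_nth (Zf w) n \<ge> fps_nth (Cf w) i * fps_nth (Zf w) (n - i)" if "i \<le> n" for i n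
  proof -
    have "fps_nth (Cf w) i * fps_nth (Zf w) (n - i) \<le> (\<Sum>i=0..n. fps_nth (Cf w) i * fps_nth (Zf w) (n - i))"
      using that Cf_nonneg Z_nonneg w
      by (intro member_le_sum[where f="\<lambda>i. fps_nth (Cf w) i * fps_nth (Zf w) (n - i)"]) auto
    then show ?thesis using Z_nth_rec[of w n] Vw_nonneg[of w n] w by linarith
  qed
  have Zge2: "fps_nth (Zf w) n \<ge> fps_nth (Vw w) n" for n
  proof -
    have "(\<Sum>i=0..n. fps_nth (Cf w) i * fps_nth (Zf w) (n - i)) \<ge> 0"
      using Cf_nonneg Z_nonneg w by (intro sum_nonneg mult_nonneg_nonneg) auto
    then show ?thesis using Z_nth_rec[of w n] by linarith
  qed
  have Cge: "fps_nth (Cf w) k \<ge> fps_nth Ur i * fps_nth (Vw w) (k - i)" if "i \<le> k" for i k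
    unfolding Cf_def fps_mult_nth using that w
    by (intro member_le_sum[where f="\<lambda>i. fps_nth Ur i * fps_nth (Vw w) (k - i)"])
       (auto simp: Ur_def u_nonneg Vw_nonneg)
  have key: "U_coeff p n * (vm * vm) \<le> fps_nth (Zf w) (n + 2 * m)" for n
  proof -
    have z1: "fps_nth (Zf w) (n + 2 * m) \<ge> fps_nth (Cf w) (n + m) * fps_nth (Zf w) m"
      using Zge1[of "n + m" "n + 2 * m"] by simp
    moreover have "fps_nth (Cf w) (n + m) \<ge> U_coeff p n * vm"
      using Cge[of n "n + m"] by (simp add: Ur_def vm_def)
    moreover have "fps_nth (Zf w) m \<ge> vm" using Zge2[of m] by (simp add: vm_def)
    moreover have "U_coeff p n * vm \<ge> 0" using vm u_nonneg by simp
    moreover have "fps_nth (Zf w) m \<ge> 0" using Z_nonneg w by simp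
    ultimately have "U_coeff p n * vm * vm \<le> fps_nth (Cf w) (n + m) * fps_nth (Zf w) m"
      using vm by (intro mult_mono) auto
    then show ?thesis using z1 by (simp add: mult.assoc)
  qed
  define K where "K = vm * vm * r ^ (2 * m)"
  have K: "K > 0" using vm r0 by (simp add: K_def)
  have "summable (\<lambda>n. U_coeff p n * r ^ n)"
  proof (rule summable_comparison_test')
    show "summable (\<lambda>n. fps_nth (Zf w) (n + 2 * m) * r ^ (n + 2 * m) / K)"
      using sz2 by (rule summable_divide)
    fix n
    have "U_coeff p n * r ^ n * K = U_coeff p n * (vm * vm) * r ^ (n + 2 * m)"
      by (simp add: K_def power_add algebra_simps)
    also have "\<dots> \<le> fps_nth (Zf w) (n + 2 * m) * r ^ (n + 2 * m)"
      using key r0 by (intro mult_right_mono) auto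
    finally have "U_coeff p n * r ^ n \<le> fps_nth (Zf w) (n + 2 * m) * r ^ (n + 2 * m) / K"
      using K by (simp add: field_simps)
    then show "norm (U_coeff p n * r ^ n) \<le> fps_nth (Zf w) (n + 2 * m) * r ^ (n + 2 * m) / K"
      using u_nonneg r0 by simp
  qed
  then have "conv_radius (U_coeff p) \<ge> norm r" by (rule conv_radius_geI)
  then show False using radU r r0 by simp
qed

end

definition cf :: "real fps \<Rightarrow> complex fps" where
  "cf F = Abs_fps (\<lambda>n. of_real (fps_nth F n))"

lemma rad_cf: "fps_conv_radius (cf F) = fps_conv_radius F"
proof -
  have "fps_conv_radius (cf F) = conv_radius (\<lambda>n. norm (complex_of_real (fps_nth F n)))"
    unfolding fps_conv_radius_def cf_def by (subst conv_radius_norm) simp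
  also have "\<dots> = conv_radius (\<lambda>n. norm (fps_nth F n))" by simp
  also have "\<dots> = fps_conv_radius F" unfolding fps_conv_radius_def by (rule conv_radius_norm)
  finally show ?thesis .
qed

lemma eval_cf_real:
  assumes "ereal \<bar>x\<bar> < fps_conv_radius F"
  shows "eval_fps (cf F) (of_real x) = of_real (eval_fps F x)"
proof -
  have "(\<lambda>n. fps_nth F n * x ^ n) sums eval_fps F x"
    using sums_eval_fps[of x F] assms by simp
  then have "(\<lambda>n. complex_of_real (fps_nth F n * x ^ n)) sums of_real (eval_fps F x)"
    by (simp only: sums_of_real_iff)
  then have "(\<lambda>n. fps_nth (cf F) n * (of_real x) ^ n) sums of_real (eval_fps F x)"
    by (simp add: cf_def)
  moreover have "(\<lambda>n. fps_nth (cf F) n * (of_real x) ^ n) sums eval_fps (cf F) (of_real x)"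
    using assms by (intro sums_eval_fps) (simp add: rad_cf)
  ultimately show ?thesis using sums_unique2 by blast
qed

lemma eval_cf_cnj:
  assumes "ereal (norm z) < fps_conv_radius F"
  shows "eval_fps (cf F) (cnj z) = cnj (eval_fps (cf F) z)"
proof -
  have "(\<lambda>n. fps_nth (cf F) n * z ^ n) sums eval_fps (cf F) z"
    using assms by (intro sums_eval_fps) (simp add: rad_cf)
  then have "(\<lambda>n. cnj (fps_nth (cf F) n * z ^ n)) sums cnj (eval_fps (cf F) z)"
    by (simp only: sums_cnj)
  then have "(\<lambda>n. fps_nth (cf F) n * (cnj z) ^ n) sums cnj (eval_fps (cf F) z)"
    by (simp add: cf_def)
  moreover have "(\<lambda>n. fps_nth (cf F) n * (cnj z) ^ n) sums eval_fps (cf F) (cnj z)"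
    using assms by (intro sums_eval_fps) (simp add: rad_cf)
  ultimately show ?thesis using sums_unique2 by blast
qed

lemma cf_deriv: "fps_deriv (cf F) = cf (fps_deriv F)"
  by (simp add: fps_eq_iff cf_def)

lemma local_inverse:
  fixes f :: "complex \<Rightarrow> complex"
  assumes holf: "f holomorphic_on S" and S: "open S" "\<xi> \<in> S" and re: "Im \<xi> = 0"
    and dnz: "deriv f \<xi> \<noteq> 0"
    and sym: "\<And>z. z \<in> S \<Longrightarrow> cnj z \<in> S \<and> f (cnj z) = cnj (f z)"
  obtains r g where "r > 0" "ball \<xi> r \<subseteq> S" "open (f ` ball \<xi> r)" "g holomorphic_on (f ` ball \<xi> r)"
    "\<And>z. z \<in> ball \<xi> r \<Longrightarrow> g (f z) = z"
    "\<And>z. z \<in> ball \<xi> r \<Longrightarrow> deriv f z * deriv g (f z) = 1"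
    "\<And>s. s \<in> f ` ball \<xi> r \<Longrightarrow> cnj s \<in> f ` ball \<xi> r \<and> g (cnj s) = cnj (g s)"
proof -
  obtain r where r: "r > 0" "ball \<xi> r \<subseteq> S" "inj_on f (ball \<xi> r)"
    using has_complex_derivative_locally_injective[OF holf S(2) S(1) dnz] by metis
  have holr: "f holomorphic_on ball \<xi> r" using holf r(2) by (rule holomorphic_on_subset)
  obtain g where g: "g holomorphic_on (f ` ball \<xi> r)"
    "\<And>z. z \<in> ball \<xi> r \<Longrightarrow> deriv f z * deriv g (f z) = 1"
    "\<And>z. z \<in> ball \<xi> r \<Longrightarrow> g (f z) = z"
    using holomorphic_has_inverse[OF holr open_ball r(3)] by metis
  have op: "open (f ` ball \<xi> r)" using holr r(3) by (intro open_mapping_thm3) auto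
  have cj: "cnj s \<in> f ` ball \<xi> r \<and> g (cnj s) = cnj (g s)" if s: "s \<in> f ` ball \<xi> r" for s
  proof -
    obtain z where z: "z \<in> ball \<xi> r" "s = f z" using s by auto
    have "cnj \<xi> = \<xi>" using re by (simp add: complex_eq_iff)
    then have "dist \<xi> (cnj z) = dist \<xi> z"
      by (metis complex_cnj_diff complex_mod_cnj dist_norm)
    then have cz: "cnj z \<in> ball \<xi> r" using z by simp
    have fz: "f (cnj z) = cnj s" using sym[of z] z r(2) by auto
    show ?thesis using cz fz g(3)[OF cz] g(3)[OF z(1)] z by (metis image_eqI)
  qed
  show ?thesis using that[OF r(1) r(2) op g(1) g(3) g(2) cj] by blast
qed

lemma local_inverse_real:
  assumes "\<And>s. s \<in> T \<Longrightarrow> cnj s \<in> T \<and> g (cnj s) = cnj (g s)" "s \<in> T" "Im s = 0"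
  shows "Im (g s) = 0"
proof -
  have "cnj s = s" using assms(3) by (simp add: complex_eq_iff)
  then have "g s = cnj (g s)" using assms(1)[OF assms(2)] by simp
  then show ?thesis by (metis cnj.simps(2) neg_equal_zero)
qed

context PS
begin

definition "Uc = eval_fps (cf Ur)"
definition "Vc = eval_fps (cf Vr)"

lemma radUc: "fps_conv_radius (cf Ur) = ereal xU" by (simp add: rad_cf radUr)
lemma radVc: "fps_conv_radius (cf Vr) = ereal xV" by (simp add: rad_cf radVr)

lemma Uc_real: "\<bar>x\<bar> < xU \<Longrightarrow> Uc (of_real x) = of_real (U x)"
  unfolding Uc_def U_eval by (rule eval_cf_real) (simp add: radUr)
lemma Vc_real: "\<bar>x\<bar> < xV \<Longrightarrow> Vc (of_real x) = of_real (V x)"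
  unfolding Vc_def V_eval by (rule eval_cf_real) (simp add: radVr)
lemma Uc_cnj: "norm z < xU \<Longrightarrow> Uc (cnj z) = cnj (Uc z)"
  unfolding Uc_def by (rule eval_cf_cnj) (simp add: radUr)
lemma Vc_cnj: "norm z < xV \<Longrightarrow> Vc (cnj z) = cnj (Vc z)"
  unfolding Vc_def by (rule eval_cf_cnj) (simp add: radVr)
lemma Uc_holo: "Uc holomorphic_on ball 0 xU"
  unfolding Uc_def by (rule holomorphic_on_eval_fps) (simp add: radUc)
lemma Vc_holo: "Vc holomorphic_on ball 0 xV"
  unfolding Vc_def by (rule holomorphic_on_eval_fps) (simp add: radVc)

lemma Uc_deriv_real: "\<bar>x\<bar> < xU \<Longrightarrow> deriv Uc (of_real x) = of_real (deriv U x)"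
proof -
  assume a: "\<bar>x\<bar> < xU"
  have "deriv Uc (of_real x) = eval_fps (fps_deriv (cf Ur)) (of_real x)"
    unfolding Uc_def using a by (intro eval_fps_deriv[symmetric]) (simp add: radUc)
  also have "\<dots> = of_real (eval_fps (fps_deriv Ur) x)"
  proof -
    have "ereal \<bar>x\<bar> < ereal xU" using a by simp
    then show ?thesis unfolding cf_deriv using radUr' by (intro eval_cf_real) (rule less_le_trans)
  qed
  also have "\<dots> = of_real (deriv U x)" using a by (simp add: U_deriv_eq)
  finally show ?thesis .
qed

lemma Vc_deriv_real: "\<bar>x\<bar> < xV \<Longrightarrow> deriv Vc (of_real x) = of_real (deriv V x)"
proof -
  assume a: "\<bar>x\<bar> < xV"
  have "deriv Vc (of_real x) = eval_fps (fps_deriv (cf Vr)) (of_real x)"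
    unfolding Vc_def using a by (intro eval_fps_deriv[symmetric]) (simp add: radVc)
  also have "\<dots> = of_real (eval_fps (fps_deriv Vr) x)"
  proof -
    have "ereal \<bar>x\<bar> < ereal xV" using a by simp
    then show ?thesis unfolding cf_deriv using radVr' by (intro eval_cf_real) (rule less_le_trans)
  qed
  also have "\<dots> = of_real (deriv V x)" using a by (simp add: V_deriv_eq)
  finally show ?thesis .
qed

end

lemma Re_mult_ofr: "Re (a * complex_of_real t) = Re a * t"
  by simp

context PS
begin

lemma root_crit:
  assumes y: "y > 0" and x: "0 < x" "x < xU" "y * x < xV" and root: "U x * V (y * x) = 1"
  shows "x_crit b p y = ereal x"
proof (rule antisym)
  show "x_crit b p y \<le> ereal x" using RAD_le_root[OF y x root] .
  show "ereal x \<le> x_crit b p y"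
  proof (rule RAD_ge[OF y x(1)])
    fix t assume t: "0 < t" "t < x"
    have yt: "y * t < y * x" using t y by simp
    have Vp: "V (y * x) > 0" using V_pos x y by simp
    have "U t * V (y * t) \<le> U t * V (y * x)"
      using t x y yt by (intro mult_left_mono V_mono U_nonneg) auto
    also have "\<dots> < U x * V (y * x)"
      using t x Vp by (intro mult_strict_right_mono U_strict) auto
    finally show "t < xU \<and> y * t < xV \<and> U t * V (y * t) < 1" using t x yt root by auto
  qed
qed


lemma LOCAL:
  assumes w0: "w0 > 0" and x0: "0 < x0" "x0 < xU" "w0 * x0 < xV" and root: "U x0 * V (w0 * x0) = 1"
  shows "(free_energy b p has_real_derivative 1 / (w0 + deriv U x0 / (deriv V (w0 * x0) * (U x0)^2))) (at w0)"
    and "\<exists>r>0. \<exists>a. \<forall>y. \<bar>y - w0\<bar> < r \<longrightarrow> (\<lambda>n. a n * (y - w0)^n) sums free_energy b p y"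
proof -
  define y0 where "y0 = w0 * x0"
  have y0: "0 < y0" "y0 < xV" using w0 x0 by (auto simp: y0_def)
  define Ux where "Ux = U x0"
  define Ud where "Ud = deriv U x0"
  define Vd where "Vd = deriv V y0"
  have Ux: "Ux > 0" using U_pos x0 by (simp add: Ux_def)
  have Ud: "Ud \<ge> 0" using dU_nonneg x0 by (simp add: Ud_def)
  have Vd: "Vd > 0" using dV_pos y0 by (simp add: Vd_def)
  define s0 where "s0 = V y0"
  have s0: "s0 = 1 / Ux" using root Ux by (simp add: s0_def Ux_def y0_def field_simps)
  have s0p: "s0 > 0" using s0 Ux by simp
  define S1 where "S1 = ball (0::complex) xV \<inter> {z. 0 < Re z}"
  have S1o: "open S1" unfolding S1_def by (intro open_Int open_ball open_halfspace_Re_gt)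
  have y0S1: "complex_of_real y0 \<in> S1" using y0 by (simp add: S1_def)
  have Vholo: "Vc holomorphic_on S1" using Vc_holo by (rule holomorphic_on_subset) (auto simp: S1_def)
  have Vd0: "deriv Vc (complex_of_real y0) \<noteq> 0" using Vc_deriv_real[of y0] y0 Vd by (simp add: Vd_def)
  have Vsym: "cnj z \<in> S1 \<and> Vc (cnj z) = cnj (Vc z)" if "z \<in> S1" for z
    using that Vc_cnj by (auto simp: S1_def)
  obtain r1 Vi where r1: "r1 > 0" "ball (complex_of_real y0) r1 \<subseteq> S1"
    and T1o: "open (Vc ` ball (complex_of_real y0) r1)"
    and Viholo: "Vi holomorphic_on (Vc ` ball (complex_of_real y0) r1)"
    and ViV: "\<And>z. z \<in> ball (complex_of_real y0) r1 \<Longrightarrow> Vi (Vc z) = z"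
    and Vider: "\<And>z. z \<in> ball (complex_of_real y0) r1 \<Longrightarrow> deriv Vc z * deriv Vi (Vc z) = 1"
    and Visym: "\<And>s. s \<in> Vc ` ball (complex_of_real y0) r1 \<Longrightarrow>
         cnj s \<in> Vc ` ball (complex_of_real y0) r1 \<and> Vi (cnj s) = cnj (Vi s)"
    using local_inverse[OF Vholo S1o y0S1 _ Vd0 Vsym] by auto
  define T1 where "T1 = Vc ` ball (complex_of_real y0) r1"
  have VVi: "Vc (Vi s) = s" "Vi s \<in> ball (complex_of_real y0) r1" if "s \<in> T1" for s
    using that ViV by (auto simp: T1_def)
  have Vc_y0: "Vc (complex_of_real y0) = complex_of_real s0"
    using Vc_real[of y0] y0 by (simp add: s0_def)
  have s0T1: "complex_of_real s0 \<in> T1" using Vc_y0 r1 by (auto simp: T1_def intro!: image_eqI[of _ _ "complex_of_real y0"] simp del: of_real_eq_iff)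
  have Vi_s0: "Vi (complex_of_real s0) = complex_of_real y0"
    using ViV[of "complex_of_real y0"] r1 Vc_y0 by simp
  have Vid: "deriv Vi (complex_of_real s0) = complex_of_real (1 / Vd)"
  proof -
    have "deriv Vc (complex_of_real y0) * deriv Vi (complex_of_real s0) = 1"
      using Vider[of "complex_of_real y0"] r1 Vc_y0 by simp
    moreover have "deriv Vc (complex_of_real y0) = complex_of_real Vd"
      using Vc_deriv_real[of y0] y0 by (simp add: Vd_def)
    ultimately show ?thesis using Vd by (simp add: field_simps)
  qed
  define A where "A = (ball (0::complex) xU \<inter> {z. 0 < Re z}) \<inter> Uc -` (- {0})"
  have Ao: "open A" unfolding A_def
    by (intro continuous_open_preimage open_Int open_ball open_halfspace_Re_gt open_Compl
        holomorphic_on_imp_continuous_on holomorphic_on_subset[OF Uc_holo]) auto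
  define S2 where "S2 = A \<inter> (\<lambda>z. inverse (Uc z)) -` T1"
  have invholo: "(\<lambda>z. inverse (Uc z)) holomorphic_on A"
    by (intro holomorphic_intros holomorphic_on_subset[OF Uc_holo]) (auto simp: A_def)
  have S2o: "open S2" unfolding S2_def T1_def
    by (intro continuous_open_preimage Ao T1o holomorphic_on_imp_continuous_on invholo)
  define Wc where "Wc z = Vi (inverse (Uc z)) / z" for z
  have Wholo: "Wc holomorphic_on S2"
  proof -
    have "(Vi \<circ> (\<lambda>z. inverse (Uc z))) holomorphic_on S2"
      by (rule holomorphic_on_compose_gen[OF holomorphic_on_subset[OF invholo] Viholo])
         (auto simp: S2_def T1_def)
    then have "(\<lambda>z. Vi (inverse (Uc z))) holomorphic_on S2" by (simp add: o_def)
    moreover have "\<And>z. z \<in> S2 \<Longrightarrow> z \<noteq> 0" by (auto simp: S2_def A_def)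
    ultimately show ?thesis unfolding Wc_def by (intro holomorphic_intros) auto
  qed
  have x0S2: "complex_of_real x0 \<in> S2"
  proof -
    have "Uc (complex_of_real x0) = complex_of_real Ux" using Uc_real[of x0] x0 by (simp add: Ux_def)
    then show ?thesis using x0 Ux s0T1 s0 by (simp add: S2_def A_def inverse_eq_divide)
  qed
  have Uc_x0: "Uc (complex_of_real x0) = complex_of_real Ux" using Uc_real[of x0] x0 by (simp add: Ux_def)
  have Wc_x0: "Wc (complex_of_real x0) = complex_of_real w0"
    using Uc_x0 s0 Vi_s0 x0 by (simp add: Wc_def y0_def inverse_eq_divide)
  have Wsym: "cnj z \<in> S2 \<and> Wc (cnj z) = cnj (Wc z)" if z: "z \<in> S2" for z
  proof -
    have zA: "norm z < xU" "0 < Re z" "Uc z \<noteq> 0" "inverse (Uc z) \<in> T1" using z by (auto simp: S2_def A_def)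
    have uc: "Uc (cnj z) = cnj (Uc z)" using Uc_cnj zA by simp
    have "cnj (inverse (Uc z)) \<in> T1" "Vi (cnj (inverse (Uc z))) = cnj (Vi (inverse (Uc z)))"
      using Visym[of "inverse (Uc z)"] zA by (auto simp: T1_def)
    then show ?thesis using zA uc by (auto simp: S2_def A_def Wc_def)
  qed
  define Wd where "Wd = ((1 / Vd) * (- Ud / Ux^2) * x0 - y0) / x0^2"
  have Wd: "Wd < 0"
  proof -
    have "(1 / Vd) * (- Ud / Ux^2) * x0 \<le> 0"
      using Vd Ud Ux x0 by (simp add: divide_nonneg_pos mult_nonneg_nonneg mult_nonpos_nonneg)
    then have "(1 / Vd) * (- Ud / Ux^2) * x0 - y0 < 0" using y0 by linarith
    then show ?thesis using x0 by (simp add: Wd_def divide_neg_pos)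
  qed
  have Wder: "(Wc has_field_derivative complex_of_real Wd) (at (complex_of_real x0))"
  proof -
    have dU: "(Uc has_field_derivative complex_of_real Ud) (at (complex_of_real x0))"
    proof -
      have "(Uc has_field_derivative deriv Uc (complex_of_real x0)) (at (complex_of_real x0))"
        using x0 by (intro holomorphic_derivI[OF Uc_holo]) auto
      then show ?thesis using Uc_deriv_real[of x0] x0 by (simp add: Ud_def)
    qed
    have dinv: "((\<lambda>z. inverse (Uc z)) has_field_derivative
        - (complex_of_real Ud * inverse (Uc (complex_of_real x0) ^ Suc (Suc 0)))) (at (complex_of_real x0))"
      using DERIV_inverse_fun[OF dU] Uc_x0 Ux by simp
    have dVi: "(Vi has_field_derivative complex_of_real (1 / Vd)) (at (inverse (Uc (complex_of_real x0))))"
    proof -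
      have "inverse (Uc (complex_of_real x0)) = complex_of_real s0" using Uc_x0 s0 by (simp add: inverse_eq_divide)
      moreover have "(Vi has_field_derivative deriv Vi (complex_of_real s0)) (at (complex_of_real s0))"
        using s0T1 T1o by (intro holomorphic_derivI[OF Viholo]) (auto simp: T1_def)
      ultimately show ?thesis using Vid by simp
    qed
    have dnum: "((\<lambda>z. Vi (inverse (Uc z))) has_field_derivative
        complex_of_real (1 / Vd) * - (complex_of_real Ud * inverse (Uc (complex_of_real x0) ^ Suc (Suc 0))))
        (at (complex_of_real x0))"
      by (rule DERIV_chain2[OF dVi dinv])
    have "(Wc has_field_derivative
        ((complex_of_real (1 / Vd) * - (complex_of_real Ud * inverse (Uc (complex_of_real x0) ^ Suc (Suc 0))))
          * complex_of_real x0 - Vi (inverse (Uc (complex_of_real x0))) * 1) / (complex_of_real x0 * complex_of_real x0))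
        (at (complex_of_real x0))"
      unfolding Wc_def[abs_def] using x0 by (intro DERIV_divide dnum DERIV_ident) auto
    moreover have "((complex_of_real (1 / Vd) * - (complex_of_real Ud * inverse (Uc (complex_of_real x0) ^ Suc (Suc 0))))
          * complex_of_real x0 - Vi (inverse (Uc (complex_of_real x0))) * 1) / (complex_of_real x0 * complex_of_real x0)
        = complex_of_real Wd"
    proof -
      have "inverse (Uc (complex_of_real x0)) = complex_of_real s0" using Uc_x0 s0 by (simp add: inverse_eq_divide)
      then have "Vi (inverse (Uc (complex_of_real x0))) = complex_of_real y0" using Vi_s0 by simp
      then show ?thesis using Uc_x0 by (simp add: Wd_def power2_eq_square field_simps)
    qed
    ultimately show ?thesis by simp
  qed
  have Wd0: "deriv Wc (complex_of_real x0) \<noteq> 0"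
    using DERIV_imp_deriv[OF Wder] Wd by simp
  obtain r2 X where r2: "r2 > 0" "ball (complex_of_real x0) r2 \<subseteq> S2"
    and T2o: "open (Wc ` ball (complex_of_real x0) r2)"
    and Xholo: "X holomorphic_on (Wc ` ball (complex_of_real x0) r2)"
    and XW: "\<And>z. z \<in> ball (complex_of_real x0) r2 \<Longrightarrow> X (Wc z) = z"
    and Xder: "\<And>z. z \<in> ball (complex_of_real x0) r2 \<Longrightarrow> deriv Wc z * deriv X (Wc z) = 1"
    and Xsym: "\<And>s. s \<in> Wc ` ball (complex_of_real x0) r2 \<Longrightarrow>
         cnj s \<in> Wc ` ball (complex_of_real x0) r2 \<and> X (cnj s) = cnj (X s)"
    using local_inverse[OF Wholo S2o x0S2 _ Wd0 Wsym] by auto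
  define T2 where "T2 = Wc ` ball (complex_of_real x0) r2"
  have WX: "Wc (X s) = s" "X s \<in> ball (complex_of_real x0) r2" if "s \<in> T2" for s
    using that XW by (auto simp: T2_def)
  have w0T2: "complex_of_real w0 \<in> T2"
    using Wc_x0 r2 by (auto simp: T2_def intro!: image_eqI[of _ _ "complex_of_real x0"] simp del: of_real_eq_iff)
  obtain \<epsilon> where eps: "\<epsilon> > 0" "ball (complex_of_real w0) \<epsilon> \<subseteq> T2"
    using T2o w0T2 unfolding T2_def open_contains_ball by blast
  have X_w0: "X (complex_of_real w0) = complex_of_real x0"
    using XW[of "complex_of_real x0"] r2 Wc_x0 by simp
  have Xd: "deriv X (complex_of_real w0) = complex_of_real (1 / Wd)"
  proof -
    have "deriv Wc (complex_of_real x0) * deriv X (complex_of_real w0) = 1"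
      using Xder[of "complex_of_real x0"] r2 Wc_x0 by simp
    then show ?thesis using DERIV_imp_deriv[OF Wder] Wd by (simp add: field_simps)
  qed
  define F where "F s = - Ln (X s)" for s
  have XS2: "X s \<in> S2" if "s \<in> T2" for s using WX(2)[OF that] r2 by auto
  have Fholo: "F holomorphic_on ball (complex_of_real w0) \<epsilon>"
  proof -
    have "X holomorphic_on ball (complex_of_real w0) \<epsilon>"
      using Xholo eps by (auto simp: T2_def intro: holomorphic_on_subset)
    moreover have "X s \<notin> \<real>\<^sub>\<le>\<^sub>0" if "s \<in> ball (complex_of_real w0) \<epsilon>" for s
    proof -
      have "0 < Re (X s)" using XS2[of s] that eps by (auto simp: S2_def A_def)
      then show ?thesis by (auto simp: complex_nonpos_Reals_iff)
    qed
    ultimately show ?thesis unfolding F_def[abs_def] by (intro holomorphic_intros) auto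
  qed
  have real_pt: "free_energy b p y = Re (F (complex_of_real y))" if y: "\<bar>y - w0\<bar> < \<epsilon>" for y
  proof -
    have sT2: "complex_of_real y \<in> T2" using y eps by (auto simp: dist_norm simp flip: of_real_diff)
    have "Im (X (complex_of_real y)) = 0"
      using local_inverse_real[of T2 X, OF _ sT2] Xsym by (auto simp: T2_def)
    then obtain x' where Xy: "X (complex_of_real y) = complex_of_real x'"
      by (metis complex_is_Real_iff of_real_Re)
    have x'S2: "complex_of_real x' \<in> S2" using XS2[OF sT2] Xy by simp
    then have x': "0 < x'" "x' < xU" "Uc (complex_of_real x') \<noteq> 0" "inverse (Uc (complex_of_real x')) \<in> T1"
      by (auto simp: S2_def A_def)
    have Ux': "Uc (complex_of_real x') = complex_of_real (U x')" using Uc_real[of x'] x' by simp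
    have "Wc (complex_of_real x') = complex_of_real y" using WX(1)[OF sT2] Xy by simp
    then have ViE: "Vi (inverse (Uc (complex_of_real x'))) = complex_of_real (y * x')"
      using x' by (simp add: Wc_def field_simps)
    have inS1: "complex_of_real (y * x') \<in> S1"
      using VVi(2)[OF x'(4)] r1 ViE by auto
    then have "norm (complex_of_real (y * x')) < xV" "0 < Re (complex_of_real (y * x'))"
      unfolding S1_def by (auto simp del: of_real_mult)
    then have yx': "0 < y * x'" "\<bar>y * x'\<bar> < xV" by (simp_all only: norm_of_real Re_complex_of_real)
    have "Vc (complex_of_real (y * x')) = inverse (Uc (complex_of_real x'))"
      using VVi(1)[OF x'(4)] ViE by simp
    then have "complex_of_real (V (y * x')) = inverse (complex_of_real (U x'))"
      using Vc_real[of "y * x'"] yx' Ux' by simp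
    then have "V (y * x') = inverse (U x')" by (metis of_real_eq_iff of_real_inverse)
    moreover have "U x' > 0" using U_pos x' by simp
    ultimately have rt: "U x' * V (y * x') = 1" by simp
    have ypos: "y > 0" using yx' x' by (simp add: zero_less_mult_iff)
    have "x_crit b p y = ereal x'" using root_crit[OF ypos x'(1,2) _ rt] yx' by simp
    then have "free_energy b p y = - ln x'" by (simp add: free_energy_def)
    also have "\<dots> = Re (F (complex_of_real y))" using Xy x' by (simp add: F_def Ln_of_real)
    finally show ?thesis .
  qed
  have Fd: "(F has_field_derivative complex_of_real (1 / (w0 + Ud / (Vd * Ux^2)))) (at (complex_of_real w0))"
  proof -
    have dX: "(X has_field_derivative complex_of_real (1 / Wd)) (at (complex_of_real w0))"
      using Xd w0T2 T2o by (metis T2_def holomorphic_derivI Xholo)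
    have "((\<lambda>s. - Ln (X s)) has_field_derivative - (inverse (X (complex_of_real w0)) * complex_of_real (1 / Wd)))
          (at (complex_of_real w0))"
    proof -
      have "(Ln has_field_derivative inverse (X (complex_of_real w0))) (at (X (complex_of_real w0)))"
        using X_w0 x0 by (intro has_field_derivative_Ln) auto
      from DERIV_chain2[OF this dX] show ?thesis by (intro DERIV_minus) simp
    qed
    moreover have "- (inverse (X (complex_of_real w0)) * complex_of_real (1 / Wd)) =
                   complex_of_real (1 / (w0 + Ud / (Vd * Ux^2)))"
    proof -
      have "x0 * Wd = - (Ud / (Vd * Ux^2)) - w0"
        using x0 Vd Ux by (simp add: Wd_def y0_def power2_eq_square field_simps)
      then have e: "w0 + Ud / (Vd * Ux^2) = - (x0 * Wd)" by linarith
      have "- (inverse x0 * (1 / Wd)) = 1 / (- (x0 * Wd))"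
        using x0 Wd by (simp add: field_simps)
      then have "- (inverse x0 * (1 / Wd)) = 1 / (w0 + Ud / (Vd * Ux^2))" by (simp only: e)
      then show ?thesis using X_w0 by (metis of_real_eq_iff of_real_minus of_real_mult of_real_inverse)
    qed
    ultimately show ?thesis by (simp add: F_def[abs_def])
  qed
  show "(free_energy b p has_real_derivative 1 / (w0 + deriv U x0 / (deriv V (w0 * x0) * (U x0)^2))) (at w0)"
  proof -
    have "((\<lambda>y. F (complex_of_real y)) has_vector_derivative complex_of_real (1 / (w0 + Ud / (Vd * Ux^2)))) (at w0)"
      by (rule has_vector_derivative_real_field[OF Fd])
    then have "((\<lambda>y. Re (F (complex_of_real y))) has_field_derivative 1 / (w0 + Ud / (Vd * Ux^2))) (at w0)"
      using has_field_derivative_Re by fastforce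
    then have "(free_energy b p has_field_derivative 1 / (w0 + Ud / (Vd * Ux^2))) (at w0)"
    proof (rule has_field_derivative_transform_within_open)
      show "open (ball w0 \<epsilon>)" by simp
      show "w0 \<in> ball w0 \<epsilon>" using eps by simp
      show "Re (F (complex_of_real y)) = free_energy b p y" if "y \<in> ball w0 \<epsilon>" for y
        using real_pt[of y] that by (simp add: dist_norm abs_minus_commute)
    qed
    then show ?thesis by (simp add: Ud_def Vd_def Ux_def y0_def)
  qed
  show "\<exists>r>0. \<exists>a. \<forall>y. \<bar>y - w0\<bar> < r \<longrightarrow> (\<lambda>n. a n * (y - w0)^n) sums free_energy b p y"
  proof (intro exI conjI allI impI)
    show "\<epsilon> > 0" by (rule eps)
    fix y assume y: "\<bar>y - w0\<bar> < \<epsilon>"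
    have "complex_of_real y \<in> ball (complex_of_real w0) \<epsilon>"
      using y by (simp add: dist_norm flip: of_real_diff)
    from holomorphic_power_series[OF Fholo this]
    have "(\<lambda>n. (deriv ^^ n) F (complex_of_real w0) / fact n * (complex_of_real y - complex_of_real w0) ^ n)
          sums F (complex_of_real y)" .
    then have "(\<lambda>n. Re ((deriv ^^ n) F (complex_of_real w0) / fact n * (complex_of_real y - complex_of_real w0) ^ n))
          sums Re (F (complex_of_real y))" by (rule sums_Re)
    moreover have "Re ((deriv ^^ n) F (complex_of_real w0) / fact n * (complex_of_real y - complex_of_real w0) ^ n)
         = Re ((deriv ^^ n) F (complex_of_real w0) / fact n) * (y - w0) ^ n" for n
    proof -
      have "Re ((deriv ^^ n) F (complex_of_real w0) / fact n * (complex_of_real y - complex_of_real w0) ^ n)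
          = Re ((deriv ^^ n) F (complex_of_real w0) / fact n * complex_of_real ((y - w0) ^ n))" by simp
      also have "\<dots> = Re ((deriv ^^ n) F (complex_of_real w0) / fact n) * (y - w0) ^ n"
        by (rule Re_mult_ofr)
      finally show ?thesis .
    qed
    ultimately show "(\<lambda>n. Re ((deriv ^^ n) F (complex_of_real w0) / fact n) * (y - w0) ^ n) sums free_energy b p y"
      using real_pt[OF y] by simp
  qed
qed

end

context PS
begin

lemma U_isCont: "\<bar>x\<bar> < xU \<Longrightarrow> isCont U x"
  using U_deriv by (rule DERIV_isCont)
lemma V_isCont: "\<bar>x\<bar> < xV \<Longrightarrow> isCont V x"
  using V_deriv by (rule DERIV_isCont)

lemma EXIST:
  assumes w: "w > 0" and x: "0 < x" "x < xU" "w * x < xV" "U x * V (w * x) > 1"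
  shows "\<exists>x0. 0 < x0 \<and> x0 < xU \<and> w * x0 < xV \<and> U x0 * V (w * x0) = 1"
proof -
  have cont: "continuous_on {0..x} (\<lambda>t. U t * V (w * t))"
  proof (intro continuous_at_imp_continuous_on ballI)
    fix t assume t: "t \<in> {0..x}"
    have "isCont U t" using t x by (intro U_isCont) auto
    moreover have "isCont (\<lambda>t. V (w * t)) t"
    proof -
      have a1: "w * t \<le> w * x" using t w by (intro mult_left_mono) auto
      have a2: "0 \<le> w * t" using t w by simp
      have wt: "\<bar>w * t\<bar> < xV" using a1 a2 x(3) abs_of_nonneg[OF a2] by linarith
      have "isCont V (w * t)" by (rule V_isCont[OF wt])
      then show ?thesis by (rule isCont_o2[rotated]) (intro continuous_intros)
    qed
    ultimately show "isCont (\<lambda>t. U t * V (w * t)) t" by (intro continuous_intros)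
  qed
  obtain x0 where x0: "0 \<le> x0" "x0 \<le> x" "U x0 * V (w * x0) = 1"
    using IVT'[of "\<lambda>t. U t * V (w * t)" 0 1 x] cont x U_0 by auto
  have "x0 \<noteq> 0" using x0 U_0 by auto
  moreover have "w * x0 \<le> w * x" using x0 w by (intro mult_left_mono) auto
  ultimately show ?thesis using x0 x by (intro exI[of _ x0]) auto
qed

lemma BIG:
  assumes w: "w > 0" and big: "xV \<le> w * xU"
  shows "\<exists>x. 0 < x \<and> x < xU \<and> w * x < xV \<and> U x * V (w * x) > 1"
proof -
  define a where "a = xV / (2 * w)"
  have a: "0 < a" "w * a < xV" "a < xU"
    using w xU_pos xU_lt big by (auto simp: a_def field_simps)
  have Ua: "U a > 0" using U_pos a by simp
  have ev: "eventually (\<lambda>y. V y > 1 / U a) (at_left xV)"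
    using V_blowup by (simp add: filterlim_at_top_dense)
  moreover have "eventually (\<lambda>y. y \<in> {w * a<..<xV}) (at_left xV)"
    using a by (intro eventually_at_left_real) auto
  ultimately have ev2: "eventually (\<lambda>y. V y > 1 / U a \<and> y \<in> {w * a<..<xV}) (at_left xV)"
    by (rule eventually_conj)
  have nb: "at_left xV \<noteq> (bot :: real filter)" by simp
  obtain y where y: "V y > 1 / U a" "w * a < y" "y < xV"
    using eventually_happens'[OF nb ev2] by auto
  define x where "x = y / w"
  have xw: "w * x = y" using w by (simp add: x_def)
  have xa: "a < x" using y w by (simp add: x_def field_simps)
  have xU': "x < xU"
  proof -
    have "x < xV / w" using y w by (simp add: x_def field_simps)
    also have "xV / w \<le> xU" using big w by (simp add: field_simps)
    finally show ?thesis .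
  qed
  have "U a \<le> U x" using a xa xU' by (intro U_mono) auto
  moreover have "0 < w * a" using w a by simp
  moreover have ypos: "0 < y" using \<open>0 < w * a\<close> y(2) by linarith
  moreover have "V y > 0" using y ypos by (intro V_pos) auto
  ultimately have "U x * V y \<ge> U a * V y" by (intro mult_right_mono) auto
  moreover have "U a * V y > 1" using y Ua by (simp add: field_simps)
  moreover have "0 < w * a" using w a by simp
  ultimately show ?thesis using xw xa a xU' y by (intro exI[of _ x]) auto
qed

lemma L_props:
  assumes L: "(U \<longlongrightarrow> L) (at_left xU)"
  shows "L > 0" and "\<And>x. 0 \<le> x \<Longrightarrow> x < xU \<Longrightarrow> U x < L"
proof -
  have le: "U x \<le> L" if x: "0 \<le> x" "x < xU" for x
  proof (rule tendsto_lowerbound[OF L])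
    show "eventually (\<lambda>t. U x \<le> U t) (at_left xU)"
      using eventually_at_left_real[OF x(2)] by eventually_elim (use x in \<open>auto intro: U_mono\<close>)
  qed simp
  show "U x < L" if x: "0 \<le> x" "x < xU" for x
  proof -
    have "U x < U ((x + xU) / 2)" using x by (intro U_strict) auto
    also have "\<dots> \<le> L" using x by (intro le) auto
    finally show ?thesis .
  qed
  have "U (xU / 2) > 0" using xU_pos by (intro U_pos) auto
  also have "U (xU / 2) \<le> L" using xU_pos by (intro le) auto
  finally show "L > 0" .
qed

lemma LIMCASE:
  assumes w: "w > 0" "w * xU < xV" and L: "(U \<longlongrightarrow> L) (at_left xU)" and gt: "L * V (w * xU) > 1"
  shows "\<exists>x. 0 < x \<and> x < xU \<and> w * x < xV \<and> U x * V (w * x) > 1"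
proof -
  have "((\<lambda>x. V (w * x)) \<longlongrightarrow> V (w * xU)) (at_left xU)"
  proof -
    have wx: "\<bar>w * xU\<bar> < xV" using w xU_pos by auto
    have cV: "isCont V (w * xU)" by (rule V_isCont[OF wx])
    have "((\<lambda>x. w * x) \<longlongrightarrow> w * xU) (at_left xU)" by (intro tendsto_intros)
    from isCont_tendsto_compose[OF cV this] show ?thesis .
  qed
  then have "((\<lambda>x. U x * V (w * x)) \<longlongrightarrow> L * V (w * xU)) (at_left xU)"
    using L by (intro tendsto_mult)
  then have "eventually (\<lambda>x. U x * V (w * x) > 1) (at_left xU)"
    using gt by (rule order_tendstoD)
  moreover have "eventually (\<lambda>x. x \<in> {0<..<xU}) (at_left xU)"
    using xU_pos by (intro eventually_at_left_real) auto
  ultimately have ev2: "eventually (\<lambda>x. U x * V (w * x) > 1 \<and> x \<in> {0<..<xU}) (at_left xU)"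
    by (rule eventually_conj)
  have nb: "at_left xU \<noteq> (bot :: real filter)" by simp
  obtain x where x: "U x * V (w * x) > 1" "0 < x" "x < xU"
    using eventually_happens'[OF nb ev2] by auto
  have "w * x < w * xU" using x w by simp
  then have "w * x < xV" using w(2) by linarith
  then show ?thesis using x w by (intro exI[of _ x]) auto
qed

lemma INFCASE:
  assumes w: "w > 0" "w * xU < xV" and inf: "filterlim U at_top (at_left xU)"
  shows "\<exists>x. 0 < x \<and> x < xU \<and> w * x < xV \<and> U x * V (w * x) > 1"
proof -
  define c where "c = V (w * xU / 2)"
  have c: "c > 0" unfolding c_def using w xU_pos xU_lt by (intro V_pos) auto
  have "eventually (\<lambda>x. U x > 1 / c) (at_left xU)"
    using inf by (simp add: filterlim_at_top_dense)
  moreover have "eventually (\<lambda>x. x \<in> {xU/2<..<xU}) (at_left xU)"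
    using xU_pos by (intro eventually_at_left_real) auto
  ultimately have ev2: "eventually (\<lambda>x. U x > 1 / c \<and> x \<in> {xU/2<..<xU}) (at_left xU)"
    by (rule eventually_conj)
  have nb: "at_left xU \<noteq> (bot :: real filter)" by simp
  obtain x where x: "U x > 1 / c" "xU/2 < x" "x < xU"
    using eventually_happens'[OF nb ev2] by auto
  have wx: "w * x < w * xU" using x w by simp
  have wxV: "w * x < xV" using wx w(2) by linarith
  have "c \<le> V (w * x)" unfolding c_def using x w wx xU_pos wxV by (intro V_mono) auto
  moreover have "U x > 0" using x xU_pos by (intro U_pos) auto
  ultimately have "U x * c \<le> U x * V (w * x)" by (intro mult_left_mono) auto
  moreover have "U x * c > 1" using x c by (simp add: field_simps)
  moreover have "w * x < xV" using wx w(2) by linarith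
  ultimately show ?thesis using x w xU_pos by (intro exI[of _ x]) auto
qed

end

context PS
begin

definition "thf w x = 1 / (w + deriv U x / (deriv V (w * x) * (U x)^2))"

lemma part_i:
  assumes H: "filterlim U at_top (at_left xU) \<or> (\<exists>L. (U \<longlongrightarrow> L) (at_left xU) \<and> L * V xU \<ge> 1)"
  shows "real_analytic_on (free_energy b p) {1<..}"
  unfolding real_analytic_on_def
proof
  fix w :: real assume "w \<in> {1<..}"
  then have w1: "w > 1" by simp
  then have w: "w > 0" by simp
  have "\<exists>x. 0 < x \<and> x < xU \<and> w * x < xV \<and> U x * V (w * x) > 1"
  proof (cases "xV \<le> w * xU")
    case True then show ?thesis using BIG[OF w] by blast
  next
    case False
    then have wx: "w * xU < xV" by simp
    show ?thesis using H
    proof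
      assume "filterlim U at_top (at_left xU)"
      then show ?thesis using INFCASE[OF w wx] by blast
    next
      assume "\<exists>L. (U \<longlongrightarrow> L) (at_left xU) \<and> L * V xU \<ge> 1"
      then obtain L where L: "(U \<longlongrightarrow> L) (at_left xU)" "L * V xU \<ge> 1" by blast
      have Lp: "L > 0" using L_props(1)[OF L(1)] .
      have "V xU < V (w * xU)" using w1 xU_pos wx by (intro V_strict) auto
      then have "L * V xU < L * V (w * xU)" using Lp by simp
      then show ?thesis using L(2) LIMCASE[OF w wx L(1)] by simp
    qed
  qed
  then obtain x where "0 < x" "x < xU" "w * x < xV" "U x * V (w * x) > 1" by blast
  from EXIST[OF w this] obtain x0 where x0: "0 < x0" "x0 < xU" "w * x0 < xV" "U x0 * V (w * x0) = 1" by blast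
  show "\<exists>r>0. \<exists>a. \<forall>y. \<bar>y - w\<bar> < r \<longrightarrow> (\<lambda>n. a n * (y - w) ^ n) sums free_energy b p y"
    using LOCAL(2)[OF w x0] .
qed

end

locale PS2 = PS +
  fixes L wc :: real
  assumes LU: "(PS_U p \<longlongrightarrow> L) (at_left xU)"
    and wc1: "1 < wc" and wcx: "wc * xU < xV" and Lwc: "L * PS_V b (wc * xU) = 1"
begin

lemma Lpos: "L > 0" using L_props(1)[OF LU] .
lemma U_lt_L: "0 \<le> x \<Longrightarrow> x < xU \<Longrightarrow> U x < L" using L_props(2)[OF LU] .

lemma below:
  assumes w: "1 < w" "w < wc"
  shows "x_crit b p w = ereal xU"
proof (rule antisym)
  have w0: "w > 0" using w by simp
  show "x_crit b p w \<le> ereal xU" by (rule RAD_le_U[OF w0])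
  show "ereal xU \<le> x_crit b p w"
  proof (rule RAD_ge[OF w0 xU_pos])
    fix x assume x: "0 < x" "x < xU"
    have wx: "w * x < wc * xU" using x w xU_pos by (intro mult_strict_mono) auto
    then have wxV: "w * x < xV" using wcx by linarith
    have Vc: "V (wc * xU) > 0" using wc1 xU_pos wcx by (intro V_pos) auto
    have "U x * V (w * x) \<le> U x * V (wc * xU)"
      using x w wx wcx by (intro mult_left_mono V_mono U_nonneg) auto
    also have "\<dots> < L * V (wc * xU)"
      using U_lt_L[of x] x Vc by (intro mult_strict_right_mono) auto
    finally show "x < xU \<and> w * x < xV \<and> U x * V (w * x) < 1" using x wxV Lwc by simp
  qed
qed

lemma above:
  assumes w: "wc < w"
  shows "\<exists>x0. 0 < x0 \<and> x0 < xU \<and> w * x0 < xV \<and> U x0 * V (w * x0) = 1 \<and>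
     x_crit b p w = ereal x0 \<and> (free_energy b p has_real_derivative thf w x0) (at w)"
proof -
  have w0: "w > 0" using w wc1 by simp
  have "\<exists>x. 0 < x \<and> x < xU \<and> w * x < xV \<and> U x * V (w * x) > 1"
  proof (cases "xV \<le> w * xU")
    case True then show ?thesis using BIG[OF w0] by blast
  next
    case False
    then have wx: "w * xU < xV" by simp
    have "V (wc * xU) < V (w * xU)" using w wc1 xU_pos wx by (intro V_strict) auto
    then have "L * V (wc * xU) < L * V (w * xU)" using Lpos by simp
    then show ?thesis using Lwc LIMCASE[OF w0 wx LU] by simp
  qed
  then obtain x where "0 < x" "x < xU" "w * x < xV" "U x * V (w * x) > 1" by blast
  from EXIST[OF w0 this] obtain x0 where x0: "0 < x0" "x0 < xU" "w * x0 < xV" "U x0 * V (w * x0) = 1" by blast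
  show ?thesis
    using x0 root_crit[OF w0 x0] LOCAL(1)[OF w0 x0] by (intro exI[of _ x0]) (simp add: thf_def)
qed

lemma thf_pos: "0 < w \<Longrightarrow> 0 < x \<Longrightarrow> x < xU \<Longrightarrow> 0 < w * x \<Longrightarrow> w * x < xV \<Longrightarrow> thf w x > 0"
proof -
  assume a: "0 < w" "0 < x" "x < xU" "0 < w * x" "w * x < xV"
  have "deriv U x \<ge> 0" using a by (intro dU_nonneg) auto
  moreover have "deriv V (w * x) > 0" using a by (intro dV_pos) auto
  moreover have "U x > 0" using a by (intro U_pos) auto
  ultimately have "deriv U x / (deriv V (w * x) * (U x)^2) \<ge> 0" by simp
  then show ?thesis using a by (simp add: thf_def add_pos_nonneg)
qed

end

context PS2
begin

definition "xr w = real_of_ereal (x_crit b p w)"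

lemma above_xr:
  assumes w: "wc < w"
  shows "0 < xr w" "xr w < xU" "w * xr w < xV" "U (xr w) * V (w * xr w) = 1"
    "theta b p w = w * thf w (xr w)" "free_energy b p differentiable at w"
proof -
  obtain x0 where x0: "0 < x0" "x0 < xU" "w * x0 < xV" "U x0 * V (w * x0) = 1"
    "x_crit b p w = ereal x0" and d: "(free_energy b p has_real_derivative thf w x0) (at w)"
    using above[OF w] by blast
  have xr: "xr w = x0" using x0(5) by (simp add: xr_def)
  show "0 < xr w" "xr w < xU" "w * xr w < xV" "U (xr w) * V (w * xr w) = 1" using x0 xr by auto
  show "theta b p w = w * thf w (xr w)" using DERIV_imp_deriv[OF d] xr by (simp add: theta_def)
  show "free_energy b p differentiable at w"
    using d by (auto simp: has_field_derivative_def intro: differentiableI)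
qed

lemma near: "eventually (\<lambda>w. wc < w \<and> w * xU < xV) (at_right wc)"
proof -
  have "((\<lambda>w. w) \<longlongrightarrow> wc) (at_right wc)" by (rule tendsto_ident_at)
  moreover have "wc < xV / xU" using wcx xU_pos by (simp add: field_simps)
  ultimately have "eventually (\<lambda>w. w < xV / xU) (at_right wc)" by (rule order_tendstoD)
  then have "eventually (\<lambda>w. w * xU < xV) (at_right wc)"
    by eventually_elim (use xU_pos in \<open>simp add: field_simps\<close>)
  then show ?thesis using eventually_at_right_less by (rule eventually_conj[rotated]) 
qed

lemma xr_lim: "(xr \<longlongrightarrow> xU) (at_right wc)"
proof (rule order_tendstoI)
  fix a assume a: "a > xU"
  show "eventually (\<lambda>w. xr w < a) (at_right wc)"
    using eventually_at_right_less by eventually_elim (use a above_xr(2) in force)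
next
  fix a assume a: "a < xU"
  define a' where "a' = max a (xU / 2)"
  have a': "0 < a'" "a' < xU" "a \<le> a'" using a xU_pos by (auto simp: a'_def)
  have wca: "wc * a' < wc * xU" using a' wc1 by simp
  have Vc: "V (wc * xU) > 0" using wc1 xU_pos wcx by (intro V_pos) auto
  have "U a' * V (wc * a') \<le> U a' * V (wc * xU)"
    using a' wc1 wca wcx by (intro mult_left_mono V_mono U_nonneg) auto
  also have "\<dots> < L * V (wc * xU)"
    using U_lt_L[of a'] a' Vc by (intro mult_strict_right_mono) auto
  finally have lt: "U a' * V (wc * a') < 1" using Lwc by simp
  have "((\<lambda>w. U a' * V (w * a')) \<longlongrightarrow> U a' * V (wc * a')) (at_right wc)"
  proof -
    have wp: "0 < wc * a'" using a' wc1 by simp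
    have wa: "\<bar>wc * a'\<bar> < xV" using wca wcx abs_of_pos[OF wp] by linarith
    have "((\<lambda>w. w * a') \<longlongrightarrow> wc * a') (at_right wc)" by (intro tendsto_intros)
    from isCont_tendsto_compose[OF V_isCont[OF wa] this]
    show ?thesis by (intro tendsto_intros)
  qed
  then have ev: "eventually (\<lambda>w. U a' * V (w * a') < 1) (at_right wc)"
    using lt by (rule order_tendstoD)
  show "eventually (\<lambda>w. a < xr w) (at_right wc)"
    using ev near
  proof eventually_elim
    case (elim w)
    then have w: "wc < w" "w * xU < xV" "U a' * V (w * a') < 1" by auto
    show "a < xr w"
    proof (rule ccontr)
      assume "\<not> a < xr w"
      then have le: "xr w \<le> a'" using a' by simp
      have w0: "w > 0" using w wc1 by simp
      have wa: "w * a' < xV" using a' w w0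
        by (smt (verit, best) mult_strict_left_mono)
      have "U (xr w) \<le> U a'" using le above_xr[OF w(1)] a' by (intro U_mono) auto
      moreover have "V (w * xr w) \<le> V (w * a')"
        using le above_xr[OF w(1)] w0 wa by (intro V_mono mult_left_mono) auto
      moreover have "0 \<le> V (w * xr w)" using above_xr[OF w(1)] w0 by (intro V_nonneg) auto
      moreover have "0 \<le> U a'" using a' by (intro U_nonneg) auto
      ultimately have "U (xr w) * V (w * xr w) \<le> U a' * V (w * a')" by (intro mult_mono) 
      then show False using above_xr(4)[OF w(1)] w(3) by simp
    qed
  qed
qed

lemma xr_left: "filterlim xr (at_left xU) (at_right wc)"
proof (rule filterlim_at_withinI)
  show "filterlim xr (nhds xU) (at_right wc)" by (rule xr_lim)
  show "eventually (\<lambda>w. xr w \<in> {..<xU} - {xU}) (at_right wc)"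
    using eventually_at_right_less by eventually_elim (use above_xr(2) in auto)
qed

end

context PS2
begin

definition "Q w = deriv V (w * xr w) * (U (xr w))^2"

lemma theta_eq: "wc < w \<Longrightarrow> theta b p w = w * (1 / (w + deriv U (xr w) / Q w))"
  using above_xr(5) by (simp add: thf_def Q_def)

lemma Vdc_pos: "deriv V (wc * xU) > 0"
  using wc1 xU_pos wcx by (intro dV_pos) auto

lemma UL: "((\<lambda>w. U (xr w)) \<longlongrightarrow> L) (at_right wc)"
  using filterlim_compose[OF LU xr_left] .

lemma Q_lim: "(Q \<longlongrightarrow> deriv V (wc * xU) * L^2) (at_right wc)"
proof -
  define E where "E = eval_fps (fps_deriv Vr)"
  have wcp: "0 < wc * xU" using wc1 xU_pos by simp
  have "ereal (norm (wc * xU)) < ereal xV" using wcx wcp by simp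
  also have "\<dots> \<le> fps_conv_radius (fps_deriv Vr)" by (rule radVr')
  finally have "isCont E (wc * xU)" unfolding E_def by (rule continuous_eval_fps)
  moreover have "((\<lambda>w. w * xr w) \<longlongrightarrow> wc * xU) (at_right wc)"
    by (intro tendsto_mult tendsto_ident_at xr_lim)
  ultimately have "((\<lambda>w. E (w * xr w)) \<longlongrightarrow> E (wc * xU)) (at_right wc)"
    by (rule isCont_tendsto_compose)
  moreover have "E (wc * xU) = deriv V (wc * xU)"
    using V_deriv_eq[of "wc * xU"] wcx wcp by (simp add: E_def)
  moreover have "eventually (\<lambda>w. E (w * xr w) = deriv V (w * xr w)) (at_right wc)"
    using eventually_at_right_less
  proof eventually_elim
    case (elim w)
    have "0 < w * xr w" using above_xr(1)[OF elim] elim wc1 by simp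
    then have "\<bar>w * xr w\<bar> < xV" using above_xr(3)[OF elim] by simp
    then show ?case using V_deriv_eq by (simp add: E_def)
  qed
  ultimately have "((\<lambda>w. deriv V (w * xr w)) \<longlongrightarrow> deriv V (wc * xU)) (at_right wc)"
    using tendsto_cong by force
  then show ?thesis unfolding Q_def[abs_def] by (intro tendsto_intros UL)
qed

lemma Qlim_pos: "deriv V (wc * xU) * L^2 > 0"
  using Vdc_pos Lpos by simp

lemma lim_inf:
  assumes inf: "filterlim (deriv U) at_top (at_left xU)"
  shows "(theta b p \<longlongrightarrow> 0) (at_right wc)"
proof -
  have dU: "filterlim (\<lambda>w. deriv U (xr w)) at_top (at_right wc)"
    using filterlim_compose[OF inf xr_left] .
  have Qi: "((\<lambda>w. 1 / Q w) \<longlongrightarrow> 1 / (deriv V (wc * xU) * L^2)) (at_right wc)"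
    using Q_lim Qlim_pos by (intro tendsto_intros) auto
  have "filterlim (\<lambda>w. 1 / Q w * deriv U (xr w)) at_top (at_right wc)"
    using Qlim_pos by (intro filterlim_tendsto_pos_mult_at_top[OF Qi _ dU]) simp
  then have "filterlim (\<lambda>w. w + 1 / Q w * deriv U (xr w)) at_top (at_right wc)"
    by (intro filterlim_tendsto_add_at_top[OF tendsto_ident_at])
  then have "((\<lambda>w. w / (w + 1 / Q w * deriv U (xr w))) \<longlongrightarrow> 0) (at_right wc)"
    by (intro tendsto_divide_0[OF tendsto_ident_at] filterlim_at_top_imp_at_infinity)
  moreover have "eventually (\<lambda>w. w / (w + 1 / Q w * deriv U (xr w)) = theta b p w) (at_right wc)"
    using eventually_at_right_less by eventually_elim (simp add: theta_eq)
  ultimately show ?thesis using tendsto_cong by force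
qed

lemma lim_fin:
  assumes fin: "(deriv U \<longlongrightarrow> D) (at_left xU)"
  shows "\<exists>\<theta>c>0. (theta b p \<longlongrightarrow> \<theta>c) (at_right wc)"
proof -
  have D: "D \<ge> 0"
  proof (rule tendsto_lowerbound[OF fin])
    show "eventually (\<lambda>x. 0 \<le> deriv U x) (at_left xU)"
      using eventually_at_left_real[OF xU_pos] by eventually_elim (auto intro: dU_nonneg)
  qed simp
  define Qc where "Qc = deriv V (wc * xU) * L^2"
  have Qc: "Qc > 0" using Qlim_pos by (simp add: Qc_def)
  have dU: "((\<lambda>w. deriv U (xr w)) \<longlongrightarrow> D) (at_right wc)"
    using filterlim_compose[OF fin xr_left] .
  have den: "wc + D / Qc > 0" using D Qc wc1 by (simp add: add_pos_nonneg)
  have "((\<lambda>w. w * (1 / (w + deriv U (xr w) / Q w))) \<longlongrightarrow> wc * (1 / (wc + D / Qc))) (at_right wc)"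
    using Q_lim Qc den unfolding Qc_def[symmetric]
    by (intro tendsto_intros tendsto_ident_at dU) auto
  moreover have "eventually (\<lambda>w. w * (1 / (w + deriv U (xr w) / Q w)) = theta b p w) (at_right wc)"
    using eventually_at_right_less by eventually_elim (simp add: theta_eq)
  ultimately have "(theta b p \<longlongrightarrow> wc * (1 / (wc + D / Qc))) (at_right wc)"
    using tendsto_cong by force
  moreover have "wc * (1 / (wc + D / Qc)) > 0" using den wc1 by simp
  ultimately show ?thesis by blast
qed

end

context PS2
begin

lemma below_deriv:
  assumes w: "1 < w" "w < wc"
  shows "(free_energy b p has_real_derivative 0) (at w)"
proof (rule has_field_derivative_transform_within_open[of "\<lambda>_. - ln xU" 0 w "{1<..<wc}"])
  show "((\<lambda>_. - ln xU) has_real_derivative 0) (at w)" by (rule DERIV_const)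
  show "open {1<..<wc}" by simp
  show "w \<in> {1<..<wc}" using w by simp
  show "- ln xU = free_energy b p y" if "y \<in> {1<..<wc}" for y
    using below[of y] that by (simp add: free_energy_def)
qed

lemma part_ii:
  "(\<forall>w. 1 < w \<and> w < wc \<longrightarrow> free_energy b p differentiable at w \<and> theta b p w = 0)
   \<and> (\<forall>w. wc < w \<longrightarrow> free_energy b p differentiable at w \<and> theta b p w > 0)
   \<and> (filterlim (deriv (PS_U p)) at_top (at_left xU) \<longrightarrow> (theta b p \<longlongrightarrow> 0) (at_right wc))
   \<and> ((\<exists>D. (deriv (PS_U p) \<longlongrightarrow> D) (at_left xU)) \<longrightarrow> (\<exists>\<theta>c>0. (theta b p \<longlongrightarrow> \<theta>c) (at_right wc)))"
proof (intro conjI allI impI)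
  fix w assume w: "1 < w \<and> w < wc"
  have d: "(free_energy b p has_real_derivative 0) (at w)" using below_deriv w by auto
  show "free_energy b p differentiable at w"
    using d by (auto simp: has_field_derivative_def intro: differentiableI)
  show "theta b p w = 0" using DERIV_imp_deriv[OF d] by (simp add: theta_def)
next
  fix w assume w: "wc < w"
  show "free_energy b p differentiable at w" using above_xr(6)[OF w] .
  have w0: "0 < w" using w wc1 by simp
  have "thf w (xr w) > 0"
    using above_xr[OF w] w0 by (intro thf_pos) auto
  then show "theta b p w > 0" using above_xr(5)[OF w] w0 by simp
next
  assume "filterlim (deriv (PS_U p)) at_top (at_left xU)"
  then show "(theta b p \<longlongrightarrow> 0) (at_right wc)" by (rule lim_inf)
next
  assume "\<exists>D. (deriv (PS_U p) \<longlongrightarrow> D) (at_left xU)"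
  then obtain D where "(deriv (PS_U p) \<longlongrightarrow> D) (at_left xU)" by blast
  then show "\<exists>\<theta>c>0. (theta b p \<longlongrightarrow> \<theta>c) (at_right wc)" by (rule lim_fin)
qed

end

theorem theorem2:
  fixes b p :: "nat \<Rightarrow> nat" and xU xV :: real
  assumes p_nonzero: "\<exists>n\<ge>1. p n \<noteq> 0"
    and radV: "conv_radius (\<lambda>n. real (b n)) = ereal xV"
    and radU: "conv_radius (U_coeff p) = ereal xU"
    and "0 < xU" and "xU < xV" and "xV \<le> 1"
    and V_blowup: "filterlim (PS_V b) at_top (at_left xV)"
  shows "((filterlim (PS_U p) at_top (at_left xU)
           \<or> (\<exists>L. (PS_U p \<longlongrightarrow> L) (at_left xU) \<and> L * PS_V b xU \<ge> 1))
         \<longrightarrow> real_analytic_on (free_energy b p) {1<..})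
    \<and> (\<forall>L wc. (PS_U p \<longlongrightarrow> L) (at_left xU) \<and> L * PS_V b xU < 1
             \<and> 1 < wc \<and> wc * xU < xV \<and> L * PS_V b (wc * xU) = 1 \<longrightarrow>
           (\<forall>w. 1 < w \<and> w < wc \<longrightarrow> free_energy b p differentiable at w \<and> theta b p w = 0)
         \<and> (\<forall>w. wc < w \<longrightarrow> free_energy b p differentiable at w \<and> theta b p w > 0)
         \<and> (filterlim (deriv (PS_U p)) at_top (at_left xU)
              \<longrightarrow> (theta b p \<longlongrightarrow> 0) (at_right wc))
         \<and> ((\<exists>D. (deriv (PS_U p) \<longlongrightarrow> D) (at_left xU))
              \<longrightarrow> (\<exists>\<theta>c>0. (theta b p \<longlongrightarrow> \<theta>c) (at_right wc))))"
proof -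
  interpret PS b p xU xV using assms by unfold_locales
  show ?thesis
  proof (rule conjI)
    show "(filterlim (PS_U p) at_top (at_left xU) \<or> (\<exists>L. (PS_U p \<longlongrightarrow> L) (at_left xU) \<and> L * PS_V b xU \<ge> 1))
         \<longrightarrow> real_analytic_on (free_energy b p) {1<..}" using part_i by blast
  next
    show "\<forall>L wc. (PS_U p \<longlongrightarrow> L) (at_left xU) \<and> L * PS_V b xU < 1
             \<and> 1 < wc \<and> wc * xU < xV \<and> L * PS_V b (wc * xU) = 1 \<longrightarrow>
           (\<forall>w. 1 < w \<and> w < wc \<longrightarrow> free_energy b p differentiable at w \<and> theta b p w = 0)
         \<and> (\<forall>w. wc < w \<longrightarrow> free_energy b p differentiable at w \<and> theta b p w > 0)
         \<and> (filterlim (deriv (PS_U p)) at_top (at_left xU)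
              \<longrightarrow> (theta b p \<longlongrightarrow> 0) (at_right wc))
         \<and> ((\<exists>D. (deriv (PS_U p) \<longlongrightarrow> D) (at_left xU))
              \<longrightarrow> (\<exists>\<theta>c>0. (theta b p \<longlongrightarrow> \<theta>c) (at_right wc)))"
  proof (intro allI impI)
    fix L wc
    assume H: "(PS_U p \<longlongrightarrow> L) (at_left xU) \<and> L * PS_V b xU < 1
             \<and> 1 < wc \<and> wc * xU < xV \<and> L * PS_V b (wc * xU) = 1"
    interpret P2: PS2 b p xU xV L wc by unfold_locales (use H in auto)
    show "(\<forall>w. 1 < w \<and> w < wc \<longrightarrow> free_energy b p differentiable at w \<and> theta b p w = 0)
         \<and> (\<forall>w. wc < w \<longrightarrow> free_energy b p differentiable at w \<and> theta b p w > 0)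
         \<and> (filterlim (deriv (PS_U p)) at_top (at_left xU)
              \<longrightarrow> (theta b p \<longlongrightarrow> 0) (at_right wc))
         \<and> ((\<exists>D. (deriv (PS_U p) \<longlongrightarrow> D) (at_left xU))
              \<longrightarrow> (\<exists>\<theta>c>0. (theta b p \<longlongrightarrow> \<theta>c) (at_right wc)))"
      by (rule P2.part_ii)
  qed
  qed
qed

end
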